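(* Let $G$ be a group, $E$ a real Banach space, and $f\colon G\to E$ such that $\|f(xy)+f(xy^{-1})-2f(x)\|\le c$ for all $x,y\in G$, where $c>0$. Define $c_1=c+2\|f(1)\|$, $c_2=c+\|f(1)\|$, $c_3=c+c_1$, and $c_m=c+c_1+c_{m-2}$ for $m>3$. Then for every $x\in G$ and every $m\in\mathbb{N}$, $\|f(x^m)-mf(x)\|\le c_m$. *)

theory Defs
  imports "HOL-Analysis.Analysis" "HOL-Algebra.Group"
begin

text \<open>The constants c_m of the paper, with parameters c and a = norm (f 1):
  c_1 = c + 2a, c_2 = c + a, c_3 = c + c_1, c_m = c + c_1 + c_(m-2) for m > 3.
  The value at 0 is an irrelevant convention (c_0 is not defined in the paper).\<close>
fun cconst :: "real \<Rightarrow> real \<Rightarrow> nat \<Rightarrow> real" where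
  "cconst c a 0 = 0"
| "cconst c a (Suc 0) = c + 2 * a"
| "cconst c a (Suc (Suc 0)) = c + a"
| "cconst c a (Suc (Suc (Suc 0))) = c + (c + 2 * a)"
| "cconst c a (Suc (Suc (Suc (Suc n)))) = c + (c + 2 * a) + cconst c a (Suc (Suc n))"

end

theory Submission
  imports Defs
begin

lemma key_step:
  fixes G (structure) and f :: "'a \<Rightarrow> 'b::banach" and c :: real
  assumes "group G"
    and H: "\<And>x y. x \<in> carrier G \<Longrightarrow> y \<in> carrier G \<Longrightarrow>
           norm (f (x \<otimes> y) + f (x \<otimes> inv y) - 2 *\<^sub>R f x) \<le> c"
    and x: "x \<in> carrier G"
  shows "norm (f (x [^] Suc (Suc n)) - f (x [^] n) - 2 *\<^sub>R f x) \<le> 2 * c + 2 * norm (f \<one>)"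
proof -
  interpret group G by fact
  have xn: "x [^] n \<in> carrier G" using x by simp
  have e1: "x \<otimes> x [^] Suc n = x [^] Suc (Suc n)"
    by (rule nat_pow_Suc2[OF x, symmetric])
  have e2: "x \<otimes> inv (x [^] Suc n) = inv (x [^] n)"
    using x xn by (simp add: inv_mult_group m_assoc[symmetric] r_inv)
  have A: "norm (f (x [^] Suc (Suc n)) + f (inv (x [^] n)) - 2 *\<^sub>R f x) \<le> c"
    using H[OF x, of "x [^] Suc n"] x e1 e2 by simp
  have B: "norm (f (x [^] n) + f (inv (x [^] n)) - 2 *\<^sub>R f \<one>) \<le> c"
    using H[of \<one> "x [^] n"] xn by simp
  have eq: "f (x [^] Suc (Suc n)) - f (x [^] n) - 2 *\<^sub>R f x =
     (f (x [^] Suc (Suc n)) + f (inv (x [^] n)) - 2 *\<^sub>R f x)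
     - (f (x [^] n) + f (inv (x [^] n)) - 2 *\<^sub>R f \<one>) - 2 *\<^sub>R f \<one>"
    by (simp add: algebra_simps)
  have "norm (f (x [^] Suc (Suc n)) - f (x [^] n) - 2 *\<^sub>R f x) \<le>
     norm (f (x [^] Suc (Suc n)) + f (inv (x [^] n)) - 2 *\<^sub>R f x)
     + norm (f (x [^] n) + f (inv (x [^] n)) - 2 *\<^sub>R f \<one>) + norm (2 *\<^sub>R f \<one>)"
    unfolding eq by (meson norm_triangle_ineq4 order_trans add_mono order_refl)
  also have "\<dots> \<le> c + c + 2 * norm (f \<one>)" using A B by simp
  finally show ?thesis by simp
qed

theorem lemma2p3:
  fixes G (structure) and f :: "'a \<Rightarrow> 'b::banach" and c :: real
  assumes "group G"
    and "c > 0"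
    and "\<And>x y. x \<in> carrier G \<Longrightarrow> y \<in> carrier G \<Longrightarrow>
           norm (f (x \<otimes> y) + f (x \<otimes> inv y) - 2 *\<^sub>R f x) \<le> c"
    and "x \<in> carrier G" and "(m::nat) \<ge> 1"
  shows "norm (f (x [^] m) - real m *\<^sub>R f x) \<le> cconst c (norm (f \<one>)) m"
proof -
  interpret group G by fact
  let ?a = "norm (f \<one>)"
  have ks: "norm (f (x [^] Suc (Suc n)) - f (x [^] n) - 2 *\<^sub>R f x) \<le> 2 * c + 2 * ?a" for n
    using key_step[OF assms(1) assms(3) assms(4)] by blast
  have gen: "norm (f (x [^] m) - real m *\<^sub>R f x) \<le> (if m = 1 then 0 else cconst c ?a m)"
    if "m \<ge> 1" for m
    using that
  proof (induction m rule: less_induct)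
    case (less m)
    show ?case
    proof (cases "m \<le> 2")
      case True
      then consider "m = 1" | "m = 2" using less.prems by linarith
      then show ?thesis
      proof cases
        case 1 then show ?thesis using assms(4) by simp
      next
        case 2
        have "norm (f (x \<otimes> x) + f (x \<otimes> inv x) - 2 *\<^sub>R f x) \<le> c"
          using assms(3)[OF assms(4) assms(4)] .
        moreover have "x \<otimes> inv x = \<one>" "x [^] (2::nat) = x \<otimes> x"
          using assms(4) by (auto simp: numeral_2_eq_2)
        moreover have "f (x \<otimes> x) - 2 *\<^sub>R f x = (f (x \<otimes> x) + f \<one> - 2 *\<^sub>R f x) - f \<one>"
          by simp
        ultimately have "norm (f (x [^] (2::nat)) - 2 *\<^sub>R f x) \<le> c + ?a"
          by (smt (verit) norm_triangle_ineq4)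
        then show ?thesis using 2 by (simp add: numeral_2_eq_2)
      qed
    next
      case False
      define n where "n = m - 2"
      have m: "m = Suc (Suc n)" "n \<ge> 1" using False unfolding n_def by arith+
      have IH: "norm (f (x [^] n) - real n *\<^sub>R f x) \<le> (if n = 1 then 0 else cconst c ?a n)"
        using less.IH[of n] m by simp
      have eq: "f (x [^] m) - real m *\<^sub>R f x = (f (x [^] Suc (Suc n)) - f (x [^] n) - 2 *\<^sub>R f x)
          + (f (x [^] n) - real n *\<^sub>R f x)"
        using m by (simp add: algebra_simps)
      have "norm (f (x [^] m) - real m *\<^sub>R f x) \<le> 2 * c + 2 * ?a + (if n = 1 then 0 else cconst c ?a n)"
        unfolding eq using ks[of n] IH by (meson norm_triangle_le add_mono)
      moreover have "2 * c + 2 * ?a + (if n = 1 then 0 else cconst c ?a n) = cconst c ?a m"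
      proof (cases "n = 1")
        case True then show ?thesis using m by (simp add: numeral_3_eq_3)
      next
        case False
        define k where "k = n - 2"
        have "n = Suc (Suc k)" using m(2) False unfolding k_def by arith
        then show ?thesis using m by simp
      qed
      ultimately show ?thesis using m by simp
    qed
  qed
  have "cconst c ?a 1 \<ge> 0" using assms(2) by simp
  then show ?thesis using gen[OF assms(5)] by (auto split: if_splits)
qed

end
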